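(* Let $G$ be the corresponding graph of an array $A$ with reach one, let $F$ be a resulting DFS forest of $G$, and let $T$ be any component of $F$. Then the root of $T$ has at most two outgoing arcs, every leaf of $T$ has at most one incoming arc, and every internal vertex of $T$ has exactly one incoming and exactly one outgoing arc.
   Context: An array is a finite sequence $A=(A[1],\dots,A[n])$ of pairwise distinct real numbers. The corresponding graph of $A$ with reach one is the directed graph on $\{1,\dots,n\}$ with an arc $(i,j)$ whenever $j\equiv i\pm1\pmod n$, $j\ne i$, and $A[i]<A[j]$ (indices cyclic). The resulting DFS forest of a directed graph is the spanning subgraph consisting of exactly the arcs $(\mathrm{parent}(w),w)$ along which depth-first search discovers new vertices; components are connected components of the underlying undirected graph, and each is a rooted tree whose root is the vertex with no incoming arc. A leaf of a rooted tree is an end-vertex (degree-one vertex) of the tree; an internal vertex is a vertex that is neither the root nor a leaf. *)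

theory Defs
  imports Complex_Main
begin

definition reach_one_graph :: "nat \<Rightarrow> (nat \<Rightarrow> real) \<Rightarrow> (nat \<times> nat) set" where
  "reach_one_graph n A = {(i, j). i \<in> {1..n} \<and> j \<in> {1..n} \<and> j \<noteq> i \<and>
      (j mod n = (i + 1) mod n \<or> (j + 1) mod n = i mod n) \<and> A i < A j}"

text \<open>States of a depth-first search on digraph (V,E):
  (visited vertices, stack of active vertices, tree arcs discovered so far).\<close>
inductive dfs_state :: "'a set \<Rightarrow> ('a \<times> 'a) set \<Rightarrow> 'a set \<Rightarrow> 'a list \<Rightarrow> ('a \<times> 'a) set \<Rightarrow> bool"
  for V :: "'a set" and E :: "('a \<times> 'a) set" where
  init: "dfs_state V E {} [] {}"
| new_root: "dfs_state V E vis [] T \<Longrightarrow> v \<in> V \<Longrightarrow> v \<notin> vis \<Longrightarrow>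
      dfs_state V E (insert v vis) [v] T"
| discover: "dfs_state V E vis (u # s) T \<Longrightarrow> (u, w) \<in> E \<Longrightarrow> w \<notin> vis \<Longrightarrow>
      dfs_state V E (insert w vis) (w # u # s) (insert (u, w) T)"
| backtrack: "dfs_state V E vis (u # s) T \<Longrightarrow> (\<forall>w. (u, w) \<in> E \<longrightarrow> w \<in> vis) \<Longrightarrow>
      dfs_state V E vis s T"

definition dfs_forest :: "'a set \<Rightarrow> ('a \<times> 'a) set \<Rightarrow> ('a \<times> 'a) set \<Rightarrow> bool" where
  "dfs_forest V E F \<longleftrightarrow> dfs_state V E V [] F"

definition components :: "'a set \<Rightarrow> ('a \<times> 'a) set \<Rightarrow> 'a set set" where
  "components V F = {{w \<in> V. (v, w) \<in> (F \<union> F\<inverse>)\<^sup>*} | v. v \<in> V}"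

definition comp_arcs :: "('a \<times> 'a) set \<Rightarrow> 'a set \<Rightarrow> ('a \<times> 'a) set" where
  "comp_arcs F C = F \<inter> (C \<times> C)"

definition out_deg :: "('a \<times> 'a) set \<Rightarrow> 'a \<Rightarrow> nat" where
  "out_deg R v = card {w. (v, w) \<in> R}"

definition in_deg :: "('a \<times> 'a) set \<Rightarrow> 'a \<Rightarrow> nat" where
  "in_deg R v = card {u. (u, v) \<in> R}"

definition is_root :: "('a \<times> 'a) set \<Rightarrow> 'a set \<Rightarrow> 'a \<Rightarrow> bool" where
  "is_root R C v \<longleftrightarrow> v \<in> C \<and> (\<forall>u. (u, v) \<notin> R)"

definition is_leaf :: "('a \<times> 'a) set \<Rightarrow> 'a set \<Rightarrow> 'a \<Rightarrow> bool" where
  "is_leaf R C v \<longleftrightarrow> v \<in> C \<and> card {u. (u, v) \<in> R \<or> (v, u) \<in> R} = 1"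

definition is_internal :: "('a \<times> 'a) set \<Rightarrow> 'a set \<Rightarrow> 'a \<Rightarrow> bool" where
  "is_internal R C v \<longleftrightarrow> v \<in> C \<and> \<not> is_root R C v \<and> \<not> is_leaf R C v"

end

theory Submission
  imports Defs
begin

lemma dfs_inv:
  assumes "dfs_state V E vis s T"
  shows "T \<subseteq> E \<and> (\<forall>u w. (u,w)\<in>T \<longrightarrow> w\<in>vis) \<and> (\<forall>u u' w. (u,w)\<in>T \<longrightarrow> (u',w)\<in>T \<longrightarrow> u=u')"
  using assms by induction (simp_all, blast+)

lemma mod_inj:
  fixes j j' n :: nat
  assumes "j \<in> {1..n}" "j' \<in> {1..n}" "j mod n = j' mod n"
  shows "j = j'"
proof -
  have h: "\<And>x. x \<in> {1..n} \<Longrightarrow> x mod n = (if x = n then 0 else x)" by auto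
  show ?thesis using assms h[of j] h[of j'] by (auto split: if_splits)
qed

definition nb :: "nat \<Rightarrow> nat \<Rightarrow> nat set" where
  "nb n i = {j \<in> {1..n}. j \<noteq> i \<and> (j mod n = (i + 1) mod n \<or> (j + 1) mod n = i mod n)}"

lemma mod_pred_eq:
  fixes j j' n :: nat
  assumes "n \<ge> 1" "(j+1) mod n = (j'+1) mod n"
  shows "j mod n = j' mod n"
proof -
  have "j mod n = (j + 1 + (n - 1)) mod n" using assms(1) by simp
  also have "\<dots> = ((j + 1) mod n + (n - 1)) mod n" by (simp add: mod_add_left_eq)
  also have "\<dots> = ((j' + 1) mod n + (n - 1)) mod n" using assms(2) by simp
  also have "\<dots> = (j' + 1 + (n - 1)) mod n" by (simp add: mod_add_left_eq)
  also have "\<dots> = j' mod n" using assms(1) by simp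
  finally show ?thesis .
qed

lemma card_le1:
  assumes "finite S" "\<And>a b. a \<in> S \<Longrightarrow> b \<in> S \<Longrightarrow> a = b"
  shows "card S \<le> 1"
proof -
  have "card S \<le> Suc 0" using card_le_Suc0_iff_eq[OF assms(1)] assms(2) by blast
  thus ?thesis by simp
qed

lemma nb_card: "finite (nb n i) \<and> card (nb n i) \<le> 2"
proof -
  let ?S1 = "{j \<in> {1..n}. j mod n = (i + 1) mod n}"
  let ?S2 = "{j \<in> {1..n}. (j + 1) mod n = i mod n}"
  have f1: "finite ?S1" "finite ?S2" by auto
  have c1: "card ?S1 \<le> 1"
  proof (rule card_le1[OF f1(1)])
    fix a b assume "a \<in> ?S1" "b \<in> ?S1"
    thus "a = b" by (intro mod_inj[of a n b]) auto
  qed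
  have c2: "card ?S2 \<le> 1"
  proof (rule card_le1[OF f1(2)])
    fix a b assume ab: "a \<in> ?S2" "b \<in> ?S2"
    hence "n \<ge> 1" by auto
    moreover have "(a+1) mod n = (b+1) mod n" using ab by auto
    ultimately have "a mod n = b mod n" by (rule mod_pred_eq)
    thus "a = b" using ab by (intro mod_inj[of a n b]) auto
  qed
  have sub: "nb n i \<subseteq> ?S1 \<union> ?S2" unfolding nb_def by auto
  have fu: "finite (?S1 \<union> ?S2)" using f1 by blast
  have "card (nb n i) \<le> card (?S1 \<union> ?S2)" using sub fu by (rule card_mono[rotated])
  also have "\<dots> \<le> card ?S1 + card ?S2" by (rule card_Un_le)
  finally have "card (nb n i) \<le> 2" using c1 c2 by linarith
  moreover have "finite (nb n i)" using sub fu by (rule finite_subset)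
  ultimately show ?thesis by blast
qed

theorem proposition2:
  fixes n :: nat and A :: "nat \<Rightarrow> real" and F :: "(nat \<times> nat) set" and C :: "nat set"
  assumes distinct: "inj_on A {1..n}"
    and forest: "dfs_forest {1..n} (reach_one_graph n A) F"
    and comp: "C \<in> components {1..n} F"
  shows "(\<forall>r. is_root (comp_arcs F C) C r \<longrightarrow> out_deg (comp_arcs F C) r \<le> 2)
       \<and> (\<forall>v. is_leaf (comp_arcs F C) C v \<longrightarrow> in_deg (comp_arcs F C) v \<le> 1)
       \<and> (\<forall>v. is_internal (comp_arcs F C) C v \<longrightarrow>
              in_deg (comp_arcs F C) v = 1 \<and> out_deg (comp_arcs F C) v = 1)"
proof -
  let ?E = "reach_one_graph n A"
  let ?R = "comp_arcs F C"
  have inv: "F \<subseteq> ?E" "\<And>u u' w. (u,w)\<in>F \<Longrightarrow> (u',w)\<in>F \<Longrightarrow> u=u'"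
    using dfs_inv[OF forest[unfolded dfs_forest_def]] by blast+
  have RF: "?R \<subseteq> F" unfolding comp_arcs_def by auto
  have RE: "\<And>u w. (u,w) \<in> ?R \<Longrightarrow> (u,w) \<in> ?E" using RF inv(1) by blast
  have Ru: "\<And>u u' w. (u,w)\<in>?R \<Longrightarrow> (u',w)\<in>?R \<Longrightarrow> u=u'" using RF inv(2) by blast
  have outsub: "\<And>v. {w. (v,w) \<in> ?R} \<subseteq> nb n v"
    using RE unfolding reach_one_graph_def nb_def by auto
  have P1: "\<And>r. out_deg ?R r \<le> 2"
    unfolding out_deg_def using outsub nb_card by (meson card_mono order_trans)
  have indeg: "\<And>v. in_deg ?R v \<le> 1"
  proof -
    fix v
    show "in_deg ?R v \<le> 1"
    proof (cases "finite {u. (u,v) \<in> ?R}")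
      case True show ?thesis unfolding in_deg_def
        by (rule card_le1[OF True]) (use Ru in blast)
    qed (simp add: in_deg_def)
  qed
  have P3: "in_deg ?R v = 1 \<and> out_deg ?R v = 1" if iv: "is_internal ?R C v" for v
  proof -
    obtain p where p: "(p,v) \<in> ?R" using iv unfolding is_internal_def is_root_def by auto
    have I: "{u. (u,v) \<in> ?R} = {p}" using p Ru by blast
    have pE: "(p,v) \<in> ?E" using RE p by blast
    have pn: "p \<in> nb n v" and Apv: "A p < A v"
      using pE unfolding reach_one_graph_def nb_def by auto
    have os: "{w. (v,w) \<in> ?R} \<subseteq> nb n v - {p}"
      using outsub RE Apv unfolding reach_one_graph_def by fastforce
    have "card (nb n v - {p}) \<le> 1" using nb_card[of n v] pn by auto
    hence le: "out_deg ?R v \<le> 1" unfolding out_deg_def using os nb_card[of n v]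
      by (meson card_mono finite_Diff order_trans)
    have ne: "{w. (v,w) \<in> ?R} \<noteq> {}"
    proof
      assume "{w. (v,w) \<in> ?R} = {}"
      hence "{u. (u, v) \<in> ?R \<or> (v, u) \<in> ?R} = {p}" using I by auto
      thus False using iv unfolding is_internal_def is_leaf_def by auto
    qed
    have "finite {w. (v,w) \<in> ?R}" using os nb_card[of n v] finite_subset by blast
    hence "out_deg ?R v \<ge> 1" unfolding out_deg_def using ne
      by (simp add: Suc_leI card_gt_0_iff)
    thus ?thesis using le I unfolding in_deg_def by simp
  qed
  show ?thesis using P1 indeg P3 by blast
qed

end
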